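(* Fix an angle $0<\theta\le\pi/8$ and, for an angle $\alpha$, let $\phi_\alpha=\cos(\alpha)|0\rangle+\sin(\alpha)|1\rangle$. Define $\phi_{0,0}=\phi_{-\theta}$, $\phi_{0,1}=\phi_{\theta}$, $\phi_{1,0}=\phi_{\pi/2-\theta}$, $\phi_{1,1}=\phi_{\pi/2+\theta}$. Consider the bit escrow protocol with the return challenge: an honest Alice picks her bit $b$ and a uniformly random $x\in\{0,1\}$ and sends the qubit $\phi_{b,x}$ to Bob; later Bob is asked to return the deposited qubit, returns some qubit $q$, and Alice measures $q$ in the basis $\{\phi_{0,x},\phi_{1,x}\}$, setting $r_A=err$ (rejecting) unless the outcome is $\phi_{b,x}$. Then this protocol is $\left(\epsilon=O\!\left(\frac{\sqrt{p}}{\sin(2\theta)}\right),\,p\right)$ sealing, i.e., there is an absolute constant $C$ such that for every $p\in[0,1]$ the protocol is $\left(C\sqrt{p}/\sin(2\theta),\,p\right)$ sealing.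
   Context: A bit escrow protocol is $(\epsilon,p)$ sealing if, whenever Alice is honest and deposits a bit $b$ with $\Pr(b=0)=1/2$, for any (arbitrary quantum) strategy Bob uses and any value $c$ Bob learns (computed from the system Bob retains), either $\Pr(c=b)\le\frac12+\epsilon$ or $\Pr(r_A=err)\ge p$, where the probabilities are over $b$ uniform in $\{0,1\}$ and the protocol. Bob's general strategy: he may apply any unitary to the received qubit together with an ancilla, then returns a qubit to Alice and keeps the rest. *)

theory Defs
  imports "HOL-Analysis.Analysis"
begin

definition phi :: "real \<Rightarrow> nat \<Rightarrow> complex" where
  "phi \<alpha> i = (if i = 0 then complex_of_real (cos \<alpha>) else complex_of_real (sin \<alpha>))"

definition phi_bx :: "real \<Rightarrow> bool \<Rightarrow> bool \<Rightarrow> nat \<Rightarrow> complex" where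
  "phi_bx \<theta> b x =
     (if \<not> b \<and> \<not> x then phi (- \<theta>)
      else if \<not> b \<and> x then phi \<theta>
      else if b \<and> \<not> x then phi (pi/2 - \<theta>)
      else phi (pi/2 + \<theta>))"

text \<open>Index set of the joint space C^2 (x) C^d: pairs (qubit index, ancilla index).\<close>
definition jidx :: "nat \<Rightarrow> (nat \<times> nat) set" where
  "jidx d = {..<2} \<times> {..<d}"

text \<open>U (a square matrix on the joint space, entries U row col) is unitary: U^* U = I.\<close>
definition unitary_on :: "nat \<Rightarrow> ((nat \<times> nat) \<Rightarrow> (nat \<times> nat) \<Rightarrow> complex) \<Rightarrow> bool" where
  "unitary_on d U \<longleftrightarrow>
     (\<forall>a\<in>jidx d. \<forall>b\<in>jidx d. (\<Sum>c\<in>jidx d. cnj (U c a) * U c b) = (if a = b then 1 else 0))"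

definition unit_vec :: "nat \<Rightarrow> (nat \<Rightarrow> complex) \<Rightarrow> bool" where
  "unit_vec d v \<longleftrightarrow> (\<Sum>k<d. (cmod (v k))\<^sup>2) = 1"

definition qform :: "nat \<Rightarrow> (nat \<Rightarrow> nat \<Rightarrow> complex) \<Rightarrow> (nat \<Rightarrow> complex) \<Rightarrow> complex" where
  "qform d M v = (\<Sum>k<d. \<Sum>l<d. cnj (v k) * M k l * v l)"

definition psd :: "nat \<Rightarrow> (nat \<Rightarrow> nat \<Rightarrow> complex) \<Rightarrow> bool" where
  "psd d M \<longleftrightarrow> (\<forall>v. qform d M v \<in> \<real> \<and> Re (qform d M v) \<ge> 0)"

text \<open>Two effects E0, E1 of a POVM on Bob's retained system (outcomes c = 0, c = 1,
  plus possibly other outcomes): E0, E1 \<ge> 0 and E0 + E1 \<le> I.\<close>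
definition bob_povm :: "nat \<Rightarrow> (nat \<Rightarrow> nat \<Rightarrow> complex) \<Rightarrow> (nat \<Rightarrow> nat \<Rightarrow> complex) \<Rightarrow> bool" where
  "bob_povm d E0 E1 \<longleftrightarrow> psd d E0 \<and> psd d E1 \<and>
     psd d (\<lambda>k l. (if k = l then 1 else 0) - E0 k l - E1 k l)"

text \<open>Joint state after Bob's unitary U acting on (received qubit q) (x) (ancilla psi).\<close>
definition out_state :: "nat \<Rightarrow> ((nat \<times> nat) \<Rightarrow> (nat \<times> nat) \<Rightarrow> complex) \<Rightarrow> (nat \<Rightarrow> complex)
    \<Rightarrow> (nat \<Rightarrow> complex) \<Rightarrow> nat \<Rightarrow> nat \<Rightarrow> complex" where
  "out_state d U \<psi> q j l = (\<Sum>(i, k)\<in>jidx d. U (j, l) (i, k) * (q i * \<psi> k))"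

text \<open>Probability that Alice, measuring the returned qubit in the basis {phi_{0,x}, phi_{1,x}},
  obtains phi_{b,x} (i.e. accepts), when the deposited state was phi_{b,x}.\<close>
definition accept_prob :: "real \<Rightarrow> nat \<Rightarrow> ((nat \<times> nat) \<Rightarrow> (nat \<times> nat) \<Rightarrow> complex) \<Rightarrow> (nat \<Rightarrow> complex)
    \<Rightarrow> bool \<Rightarrow> bool \<Rightarrow> real" where
  "accept_prob \<theta> d U \<psi> b x =
     (\<Sum>l<d. (cmod (\<Sum>j<2. cnj (phi_bx \<theta> b x j) * out_state d U \<psi> (phi_bx \<theta> b x) j l))\<^sup>2)"

text \<open>Probability that Bob's measurement on his retained system yields outcome with effect E.\<close>
definition bob_prob :: "real \<Rightarrow> nat \<Rightarrow> ((nat \<times> nat) \<Rightarrow> (nat \<times> nat) \<Rightarrow> complex) \<Rightarrow> (nat \<Rightarrow> complex)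
    \<Rightarrow> (nat \<Rightarrow> nat \<Rightarrow> complex) \<Rightarrow> bool \<Rightarrow> bool \<Rightarrow> real" where
  "bob_prob \<theta> d U \<psi> E b x =
     (\<Sum>j<2. Re (qform d E (out_state d U \<psi> (phi_bx \<theta> b x) j)))"

text \<open>Pr(c = b), with b and x uniform and independent.\<close>
definition prob_correct :: "real \<Rightarrow> nat \<Rightarrow> ((nat \<times> nat) \<Rightarrow> (nat \<times> nat) \<Rightarrow> complex) \<Rightarrow> (nat \<Rightarrow> complex)
    \<Rightarrow> (nat \<Rightarrow> nat \<Rightarrow> complex) \<Rightarrow> (nat \<Rightarrow> nat \<Rightarrow> complex) \<Rightarrow> real" where
  "prob_correct \<theta> d U \<psi> E0 E1 =
     (\<Sum>x\<in>UNIV. bob_prob \<theta> d U \<psi> E0 False x + bob_prob \<theta> d U \<psi> E1 True x) / 4"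

text \<open>Pr(r_A = err), with b and x uniform and independent.\<close>
definition prob_err :: "real \<Rightarrow> nat \<Rightarrow> ((nat \<times> nat) \<Rightarrow> (nat \<times> nat) \<Rightarrow> complex) \<Rightarrow> (nat \<Rightarrow> complex) \<Rightarrow> real" where
  "prob_err \<theta> d U \<psi> = (\<Sum>b\<in>UNIV. \<Sum>x\<in>UNIV. 1 - accept_prob \<theta> d U \<psi> b x) / 4"

text \<open>(epsilon, p)-sealing of the bit escrow protocol with the return challenge, against all
  strategies of Bob: any ancilla dimension d, any initial ancilla pure state, any joint unitary,
  any measurement on the retained ancilla.\<close>
definition sealing :: "real \<Rightarrow> real \<Rightarrow> real \<Rightarrow> bool" where
  "sealing \<theta> \<epsilon> p \<longleftrightarrow>
     (\<forall>d U \<psi> E0 E1. 0 < d \<longrightarrow> unitary_on d U \<longrightarrow> unit_vec d \<psi> \<longrightarrow> bob_povm d E0 E1 \<longrightarrow>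
        prob_correct \<theta> d U \<psi> E0 E1 \<le> 1/2 + \<epsilon> \<or> prob_err \<theta> d U \<psi> \<ge> p)"

end

theory Submission
  imports Defs
begin

definition nrm :: "nat \<Rightarrow> (nat \<Rightarrow> complex) \<Rightarrow> real" where
  "nrm d v = sqrt (\<Sum>k<d. (cmod (v k))\<^sup>2)"

lemma nrm_L2: "nrm d v = L2_set (\<lambda>k. cmod (v k)) {..<d}"
  by (simp add: nrm_def L2_set_def)

lemma nrm_nonneg: "nrm d v \<ge> 0"
  by (simp add: nrm_def sum_nonneg)

lemma nrm_sq: "(nrm d v)\<^sup>2 = (\<Sum>k<d. (cmod (v k))\<^sup>2)"
  by (simp add: nrm_def sum_nonneg)

lemma nrm_add: "nrm d (\<lambda>l. x l + y l) \<le> nrm d x + nrm d y"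
proof -
  have "nrm d (\<lambda>l. x l + y l) \<le> L2_set (\<lambda>k. cmod (x k) + cmod (y k)) {..<d}"
    unfolding nrm_L2 by (rule L2_set_mono) (auto simp: norm_triangle_ineq)
  also have "\<dots> \<le> nrm d x + nrm d y" unfolding nrm_L2 by (rule L2_set_triangle_ineq)
  finally show ?thesis .
qed

lemma nrm_scale: "nrm d (\<lambda>l. c * x l) = cmod c * nrm d x"
proof -
  have "nrm d (\<lambda>l. c * x l) = L2_set (\<lambda>k. cmod c * cmod (x k)) {..<d}"
    unfolding nrm_L2 by (simp add: norm_mult)
  also have "\<dots> = cmod c * nrm d x" unfolding nrm_L2 by (simp add: L2_set_right_distrib)
  finally show ?thesis .
qed

lemma nrm_uminus: "nrm d (\<lambda>l. - x l) = nrm d x"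
  by (simp add: nrm_def)

lemma nrm_diff: "nrm d (\<lambda>l. x l - y l) \<le> nrm d x + nrm d y"
  using nrm_add[of d x "\<lambda>l. - y l"] nrm_uminus[of d y] by simp

lemma nrm_cong: "(\<And>l. l < d \<Longrightarrow> x l = y l) \<Longrightarrow> nrm d x = nrm d y"
  by (simp add: nrm_def)

definition Bf :: "nat \<Rightarrow> (nat \<Rightarrow> nat \<Rightarrow> complex) \<Rightarrow> (nat \<Rightarrow> complex) \<Rightarrow> (nat \<Rightarrow> complex) \<Rightarrow> complex" where
  "Bf d E x y = (\<Sum>k<d. \<Sum>l<d. cnj (x k) * E k l * y l)"

lemma qform_lin:
  "qform d E (\<lambda>l. of_real u * x l + of_real v * y l) =
    of_real (u\<^sup>2) * qform d E x + of_real (u * v) * (Bf d E x y + Bf d E y x) + of_real (v\<^sup>2) * qform d E y"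
proof -
  have "\<And>k l. cnj (of_real u * x k + of_real v * y k) * E k l * (of_real u * x l + of_real v * y l)
     = of_real (u\<^sup>2) * (cnj (x k) * E k l * x l) + of_real (u * v) * (cnj (x k) * E k l * y l + cnj (y k) * E k l * x l)
       + of_real (v\<^sup>2) * (cnj (y k) * E k l * y l)"
    by (simp add: algebra_simps power2_eq_square)
  then show ?thesis
    unfolding qform_def Bf_def
    by (simp add: sum.distrib sum_distrib_left distrib_left)
qed

definition Qf where "Qf d E v = Re (qform d E v)"
definition Sf where "Sf d E x y = Re (Bf d E x y + Bf d E y x)"

lemma Qf_lin:
  "Qf d E (\<lambda>l. of_real u * x l + of_real v * y l) = u\<^sup>2 * Qf d E x + u * v * Sf d E x y + v\<^sup>2 * Qf d E y"
  unfolding Qf_def Sf_def qform_lin by simp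

lemma Qf_cong: "(\<And>l. l < d \<Longrightarrow> x l = y l) \<Longrightarrow> Qf d E x = Qf d E y"
  by (simp add: Qf_def qform_def)

lemma qform_id_minus:
  "qform d (\<lambda>k l. (if k = l then 1 else 0) - E0 k l - E1 k l) v
     = of_real ((nrm d v)\<^sup>2) - qform d E0 v - qform d E1 v"
proof -
  have e: "\<And>k l. cnj (v k) * ((if k = l then 1 else 0) - E0 k l - E1 k l) * v l = (if k = l then cnj (v k) * v l else 0) - cnj (v k) * E0 k l * v l - cnj (v k) * E1 k l * v l"
    by (simp add: algebra_simps)
  have "qform d (\<lambda>k l. (if k = l then 1 else 0) - E0 k l - E1 k l) v
     = (\<Sum>k<d. \<Sum>l<d. (if k = l then cnj (v k) * v l else 0)) - qform d E0 v - qform d E1 v"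
    unfolding qform_def by (simp only: e sum_subtractf)
  also have "(\<Sum>k<d. \<Sum>l<d. (if k = l then cnj (v k) * v l else 0)) = (\<Sum>k<d. cnj (v k) * v k)"
    by (simp add: sum.delta)
  also have "\<dots> = of_real ((nrm d v)\<^sup>2)"
  proof -
    have "\<And>k. cnj (v k) * v k = of_real ((cmod (v k))\<^sup>2)"
      by (simp only: complex_norm_square mult.commute)
    then show ?thesis by (simp only: nrm_sq of_real_sum)
  qed
  finally show ?thesis .
qed

lemma povm_bounds:
  assumes "bob_povm d E0 E1"
  shows "Qf d E0 v \<ge> 0" "Qf d E1 v \<ge> 0" "Qf d E0 v + Qf d E1 v \<le> (nrm d v)\<^sup>2"
proof -
  show "Qf d E0 v \<ge> 0" "Qf d E1 v \<ge> 0" using assms by (auto simp: bob_povm_def psd_def Qf_def)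
  have "Re (qform d (\<lambda>k l. (if k = l then 1 else 0) - E0 k l - E1 k l) v) \<ge> 0"
    using assms by (auto simp: bob_povm_def psd_def)
  then show "Qf d E0 v + Qf d E1 v \<le> (nrm d v)\<^sup>2"
    unfolding qform_id_minus Qf_def by simp
qed

lemma disc:
  fixes S a b :: real
  assumes "a \<ge> 0" "b \<ge> 0" "\<And>t. t * S \<le> a + t\<^sup>2 * b"
  shows "S \<le> 2 * sqrt a * sqrt b"
proof (cases "b = 0")
  case True
  have "S \<le> 0"
  proof (rule ccontr)
    assume "\<not> S \<le> 0"
    then have "((a+1)/S) * S \<le> a" using assms(3)[of "(a+1)/S"] True by simp
    then show False using \<open>\<not> S \<le> 0\<close> by simp
  qed
  moreover have "0 \<le> 2 * sqrt a * sqrt b" using assms by simp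
  ultimately show ?thesis by linarith
next
  case False
  then have b: "b > 0" using assms by simp
  have "(S/(2*b)) * S \<le> a + (S/(2*b))\<^sup>2 * b" by (rule assms(3))
  then have "S\<^sup>2 / (2*b) \<le> a + S\<^sup>2/(4*b)" using b by (simp add: power2_eq_square field_simps)
  then have "S\<^sup>2 \<le> 4*a*b" using b by (simp add: field_simps)
  then have "sqrt (S\<^sup>2) \<le> sqrt (4*a*b)" by (rule real_sqrt_le_mono)
  then show ?thesis using assms by (simp add: real_sqrt_mult)
qed

lemma Sf_bound:
  assumes "\<And>v. Qf d E v \<ge> 0" "\<And>v. Qf d E v \<le> (nrm d v)\<^sup>2"
  shows "- Sf d E x y \<le> 2 * nrm d x * nrm d y"
proof -
  have "\<And>t. t * (- Sf d E x y) \<le> (nrm d x)\<^sup>2 + t\<^sup>2 * (nrm d y)\<^sup>2"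
  proof -
    fix t :: real
    have "0 \<le> Qf d E (\<lambda>l. of_real 1 * x l + of_real t * y l)" by (rule assms(1))
    also have "\<dots> = Qf d E x + t * Sf d E x y + t\<^sup>2 * Qf d E y" by (simp add: Qf_lin del: of_real_1)
    finally have "t * (- Sf d E x y) \<le> Qf d E x + t\<^sup>2 * Qf d E y" by simp
    also have "\<dots> \<le> (nrm d x)\<^sup>2 + t\<^sup>2 * (nrm d y)\<^sup>2"
      using assms(2)[of x] assms(2)[of y] by (intro add_mono mult_left_mono) auto
    finally show "t * (- Sf d E x y) \<le> (nrm d x)\<^sup>2 + t\<^sup>2 * (nrm d y)\<^sup>2" .
  qed
  from disc[OF _ _ this] show ?thesis using nrm_nonneg[of d x] nrm_nonneg[of d y] by simp
qed


lemma sum2: "(\<Sum>j<(2::nat). f j) = f 0 + f 1"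
  by (simp add: numeral_2_eq_2)

definition Wv :: "nat \<Rightarrow> ((nat \<times> nat) \<Rightarrow> (nat \<times> nat) \<Rightarrow> complex) \<Rightarrow> (nat \<Rightarrow> complex) \<Rightarrow> nat \<Rightarrow> nat \<Rightarrow> nat \<Rightarrow> complex" where
  "Wv d U \<psi> i j l = (\<Sum>k<d. U (j, l) (i, k) * \<psi> k)"

lemma out_lin: "out_state d U \<psi> q j l = q 0 * Wv d U \<psi> 0 j l + q 1 * Wv d U \<psi> 1 j l"
proof -
  have "out_state d U \<psi> q j l = (\<Sum>i<2. \<Sum>k<d. U (j, l) (i, k) * (q i * \<psi> k))"
    unfolding out_state_def jidx_def by (simp add: sum.cartesian_product)
  also have "\<dots> = q 0 * Wv d U \<psi> 0 j l + q 1 * Wv d U \<psi> 1 j l"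
    unfolding sum2 Wv_def by (simp add: sum_distrib_left algebra_simps)
  finally show ?thesis .
qed

lemma unitary_norm:
  assumes "unitary_on d U"
  shows "(\<Sum>a\<in>jidx d. (cmod (\<Sum>b\<in>jidx d. U a b * x b))\<^sup>2) = (\<Sum>b\<in>jidx d. (cmod (x b))\<^sup>2)"
proof -
  let ?J = "jidx d"
  have fin: "finite ?J" by (simp add: jidx_def)
  have u: "\<And>b c. b \<in> ?J \<Longrightarrow> c \<in> ?J \<Longrightarrow> (\<Sum>a\<in>?J. U a b * cnj (U a c)) = (if c = b then 1 else 0)"
    using assms unfolding unitary_on_def by (simp add: mult.commute)
  have "complex_of_real (\<Sum>a\<in>?J. (cmod (\<Sum>b\<in>?J. U a b * x b))\<^sup>2)
      = (\<Sum>a\<in>?J. (\<Sum>b\<in>?J. U a b * x b) * cnj (\<Sum>c\<in>?J. U a c * x c))"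
    by (simp only: of_real_sum complex_norm_square)
  also have "\<dots> = (\<Sum>a\<in>?J. \<Sum>b\<in>?J. \<Sum>c\<in>?J. (x b * cnj (x c)) * (U a b * cnj (U a c)))"
    by (simp add: sum_product algebra_simps)
  also have "\<dots> = (\<Sum>b\<in>?J. \<Sum>a\<in>?J. \<Sum>c\<in>?J. (x b * cnj (x c)) * (U a b * cnj (U a c)))"
    by (rule sum.swap)
  also have "\<dots> = (\<Sum>b\<in>?J. \<Sum>c\<in>?J. \<Sum>a\<in>?J. (x b * cnj (x c)) * (U a b * cnj (U a c)))"
    by (rule sum.cong[OF refl], rule sum.swap)
  also have "\<dots> = (\<Sum>b\<in>?J. \<Sum>c\<in>?J. (x b * cnj (x c)) * (\<Sum>a\<in>?J. U a b * cnj (U a c)))"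
    by (simp only: sum_distrib_left)
  also have "\<dots> = (\<Sum>b\<in>?J. \<Sum>c\<in>?J. (if c = b then x b * cnj (x c) else 0))"
    by (intro sum.cong refl) (simp add: u)
  also have "\<dots> = (\<Sum>b\<in>?J. x b * cnj (x b))"
    using fin by (simp add: sum.delta)
  also have "\<dots> = complex_of_real (\<Sum>b\<in>?J. (cmod (x b))\<^sup>2)"
    by (simp only: of_real_sum complex_norm_square)
  finally show ?thesis by (simp only: of_real_eq_iff)
qed

lemma out_norm:
  assumes "unitary_on d U"
  shows "(\<Sum>j<2. \<Sum>l<d. (cmod (out_state d U \<psi> q j l))\<^sup>2)
         = (\<Sum>i<2. (cmod (q i))\<^sup>2) * (\<Sum>k<d. (cmod (\<psi> k))\<^sup>2)"
proof -
  let ?x = "\<lambda>(i::nat, k::nat). q i * \<psi> k"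
  have "(\<Sum>j<2. \<Sum>l<d. (cmod (out_state d U \<psi> q j l))\<^sup>2)
      = (\<Sum>a\<in>jidx d. (cmod (\<Sum>b\<in>jidx d. U a b * ?x b))\<^sup>2)"
    unfolding jidx_def out_state_def by (simp add: sum.cartesian_product split_def)
  also have "\<dots> = (\<Sum>b\<in>jidx d. (cmod (?x b))\<^sup>2)"
    by (rule unitary_norm[OF assms])
  also have "\<dots> = (\<Sum>(i,k)\<in>{..<2}\<times>{..<d}. (cmod (q i * \<psi> k))\<^sup>2)"
    unfolding jidx_def by (rule sum.cong) auto
  also have "\<dots> = (\<Sum>i<2. \<Sum>k<d. (cmod (q i * \<psi> k))\<^sup>2)"
    by (simp add: sum.cartesian_product)
  also have "\<dots> = (\<Sum>i<2. (cmod (q i))\<^sup>2) * (\<Sum>k<d. (cmod (\<psi> k))\<^sup>2)"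
    by (simp add: sum_product norm_mult power_mult_distrib)
  finally show ?thesis .
qed


definition Om where "Om d U \<psi> \<alpha> j l = out_state d U \<psi> (phi \<alpha>) j l"
definition av where "av d U \<psi> \<alpha> l = of_real (cos \<alpha>) * Om d U \<psi> \<alpha> 0 l + of_real (sin \<alpha>) * Om d U \<psi> \<alpha> 1 l"
definition ev where "ev d U \<psi> \<alpha> l = - of_real (sin \<alpha>) * Om d U \<psi> \<alpha> 0 l + of_real (cos \<alpha>) * Om d U \<psi> \<alpha> 1 l"

lemma cs1: "(complex_of_real (cos a))\<^sup>2 + (complex_of_real (sin a))\<^sup>2 = 1"
  by (metis of_real_add of_real_power of_real_1 sin_cos_squared_add2)

lemma Om0: "Om d U \<psi> \<alpha> 0 l = of_real (cos \<alpha>) * av d U \<psi> \<alpha> l - of_real (sin \<alpha>) * ev d U \<psi> \<alpha> l"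
proof -
  have "of_real (cos \<alpha>) * av d U \<psi> \<alpha> l - of_real (sin \<alpha>) * ev d U \<psi> \<alpha> l
     = ((complex_of_real (cos \<alpha>))\<^sup>2 + (complex_of_real (sin \<alpha>))\<^sup>2) * Om d U \<psi> \<alpha> 0 l"
    unfolding av_def ev_def by (simp add: algebra_simps power2_eq_square)
  then show ?thesis by (simp add: cs1)
qed

lemma Om1: "Om d U \<psi> \<alpha> 1 l = of_real (sin \<alpha>) * av d U \<psi> \<alpha> l + of_real (cos \<alpha>) * ev d U \<psi> \<alpha> l"
proof -
  have "of_real (sin \<alpha>) * av d U \<psi> \<alpha> l + of_real (cos \<alpha>) * ev d U \<psi> \<alpha> l
     = ((complex_of_real (cos \<alpha>))\<^sup>2 + (complex_of_real (sin \<alpha>))\<^sup>2) * Om d U \<psi> \<alpha> 1 l"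
    unfolding av_def ev_def by (simp add: algebra_simps power2_eq_square)
  then show ?thesis by (simp add: cs1)
qed

lemma phi01: "phi \<alpha> 0 = of_real (cos \<alpha>)" "phi \<alpha> 1 = of_real (sin \<alpha>)"
  by (simp_all add: phi_def)

lemma accept_av: "(\<Sum>l<d. (cmod (\<Sum>j<2. cnj (phi \<alpha> j) * out_state d U \<psi> (phi \<alpha>) j l))\<^sup>2)
   = (nrm d (av d U \<psi> \<alpha>))\<^sup>2"
  unfolding nrm_sq sum2 phi01 av_def Om_def by simp

lemma rot_norm:
  fixes c s :: real and z0 z1 :: complex
  assumes "c\<^sup>2 + s\<^sup>2 = 1"
  shows "(cmod z0)\<^sup>2 + (cmod z1)\<^sup>2 = (cmod (of_real c * z0 + of_real s * z1))\<^sup>2 + (cmod (- of_real s * z0 + of_real c * z1))\<^sup>2"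
proof -
  have "(cmod (of_real c * z0 + of_real s * z1))\<^sup>2 + (cmod (- of_real s * z0 + of_real c * z1))\<^sup>2
     = (c\<^sup>2 + s\<^sup>2) * ((Re z0)\<^sup>2 + (Im z0)\<^sup>2 + (Re z1)\<^sup>2 + (Im z1)\<^sup>2)"
    unfolding cmod_power2 by (simp add: power2_eq_square algebra_simps)
  then show ?thesis using assms by (simp add: cmod_power2)
qed

lemma av_ev_norm:
  assumes "unitary_on d U" "unit_vec d \<psi>"
  shows "(nrm d (av d U \<psi> \<alpha>))\<^sup>2 + (nrm d (ev d U \<psi> \<alpha>))\<^sup>2 = 1"
proof -
  have "1 = (\<Sum>j<2. \<Sum>l<d. (cmod (out_state d U \<psi> (phi \<alpha>) j l))\<^sup>2)"
    using out_norm[OF assms(1), of \<psi> "phi \<alpha>"] assms(2)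
    unfolding unit_vec_def sum2 phi01 by simp
  also have "\<dots> = (\<Sum>l<d. (cmod (Om d U \<psi> \<alpha> 0 l))\<^sup>2 + (cmod (Om d U \<psi> \<alpha> 1 l))\<^sup>2)"
    unfolding sum2 Om_def by (simp add: sum.distrib)
  also have "\<dots> = (\<Sum>l<d. (cmod (av d U \<psi> \<alpha> l))\<^sup>2 + (cmod (ev d U \<psi> \<alpha> l))\<^sup>2)"
    unfolding av_def ev_def by (rule sum.cong[OF refl], rule rot_norm) simp
  finally show ?thesis by (simp add: nrm_sq sum.distrib)
qed

lemma bob_av:
  "(\<Sum>j<2. Re (qform d E (out_state d U \<psi> (phi \<alpha>) j))) = Qf d E (av d U \<psi> \<alpha>) + Qf d E (ev d U \<psi> \<alpha>)"
proof -
  have e0: "out_state d U \<psi> (phi \<alpha>) 0 = (\<lambda>l. of_real (cos \<alpha>) * av d U \<psi> \<alpha> l + of_real (- sin \<alpha>) * ev d U \<psi> \<alpha> l)"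
    using Om0 unfolding Om_def by (auto simp: fun_eq_iff)
  have e1: "out_state d U \<psi> (phi \<alpha>) 1 = (\<lambda>l. of_real (sin \<alpha>) * av d U \<psi> \<alpha> l + of_real (cos \<alpha>) * ev d U \<psi> \<alpha> l)"
    using Om1 unfolding Om_def by (auto simp: fun_eq_iff)
  have "(\<Sum>j<2. Re (qform d E (out_state d U \<psi> (phi \<alpha>) j)))
     = Qf d E (out_state d U \<psi> (phi \<alpha>) 0) + Qf d E (out_state d U \<psi> (phi \<alpha>) 1)"
    unfolding sum2 Qf_def by simp
  also have "\<dots> = Qf d E (av d U \<psi> \<alpha>) + Qf d E (ev d U \<psi> \<alpha>)"
    unfolding e0 e1 Qf_lin using sin_cos_squared_add2[of \<alpha>] by algebra
  finally show ?thesis .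
qed

lemma av_W: "av d U \<psi> \<alpha> l = of_real (cos \<alpha>) * (of_real (cos \<alpha>) * Wv d U \<psi> 0 0 l + of_real (sin \<alpha>) * Wv d U \<psi> 1 0 l)
   + of_real (sin \<alpha>) * (of_real (cos \<alpha>) * Wv d U \<psi> 0 1 l + of_real (sin \<alpha>) * Wv d U \<psi> 1 1 l)"
  unfolding av_def Om_def out_lin phi01 ..

lemma ev_W: "ev d U \<psi> \<alpha> l = - of_real (sin \<alpha>) * (of_real (cos \<alpha>) * Wv d U \<psi> 0 0 l + of_real (sin \<alpha>) * Wv d U \<psi> 1 0 l)
   + of_real (cos \<alpha>) * (of_real (cos \<alpha>) * Wv d U \<psi> 0 1 l + of_real (sin \<alpha>) * Wv d U \<psi> 1 1 l)"
  unfolding ev_def Om_def out_lin phi01 ..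


lemma Sf_bound2:
  assumes "\<And>v. Qf d E v \<ge> 0" "\<And>v. Qf d E v \<le> (nrm d v)\<^sup>2"
  shows "Sf d E x y \<le> 2 * nrm d x * nrm d y"
proof -
  have "\<And>t. t * Sf d E x y \<le> (nrm d x)\<^sup>2 + t\<^sup>2 * (nrm d y)\<^sup>2"
  proof -
    fix t :: real
    have "0 \<le> Qf d E (\<lambda>l. of_real 1 * x l + of_real (- t) * y l)" by (rule assms(1))
    also have "\<dots> = Qf d E x - t * Sf d E x y + t\<^sup>2 * Qf d E y" unfolding Qf_lin by simp
    finally have "t * Sf d E x y \<le> Qf d E x + t\<^sup>2 * Qf d E y" by simp
    also have "\<dots> \<le> (nrm d x)\<^sup>2 + t\<^sup>2 * (nrm d y)\<^sup>2"
      using assms(2)[of x] assms(2)[of y] by (intro add_mono mult_left_mono) auto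
    finally show "t * Sf d E x y \<le> (nrm d x)\<^sup>2 + t\<^sup>2 * (nrm d y)\<^sup>2" .
  qed
  from disc[OF _ _ this] show ?thesis using nrm_nonneg[of d x] nrm_nonneg[of d y] by simp
qed

definition aF :: "complex \<Rightarrow> complex \<Rightarrow> complex \<Rightarrow> complex \<Rightarrow> complex \<Rightarrow> complex \<Rightarrow> complex" where
  "aF co si w00 w10 w01 w11 = co * (co * w00 + si * w10) + si * (co * w01 + si * w11)"
definition eF :: "complex \<Rightarrow> complex \<Rightarrow> complex \<Rightarrow> complex \<Rightarrow> complex \<Rightarrow> complex \<Rightarrow> complex" where
  "eF co si w00 w10 w01 w11 = - si * (co * w00 + si * w10) + co * (co * w01 + si * w11)"

lemma rel_alg:
  fixes c s :: complex
  assumes "c\<^sup>2 + s\<^sup>2 = 1"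
  shows
  "(c\<^sup>2 - s\<^sup>2) * (aF c s w00 w10 w01 w11 - aF c (-s) w00 w10 w01 w11) =
     c * s * (eF c (-s) w00 w10 w01 w11 + eF c s w00 w10 w01 w11 - eF s c w00 w10 w01 w11 - eF (-s) c w00 w10 w01 w11)"
  "(c\<^sup>2 - s\<^sup>2) * (aF s c w00 w10 w01 w11 - aF (-s) c w00 w10 w01 w11) =
     c * s * (eF c (-s) w00 w10 w01 w11 + eF c s w00 w10 w01 w11 - eF s c w00 w10 w01 w11 - eF (-s) c w00 w10 w01 w11)"
  "s * c * (aF c (-s) w00 w10 w01 w11 + aF c s w00 w10 w01 w11 - aF s c w00 w10 w01 w11 - aF (-s) c w00 w10 w01 w11) =
     s\<^sup>2 * (eF c s w00 w10 w01 w11 - eF c (-s) w00 w10 w01 w11) + c\<^sup>2 * (eF (-s) c w00 w10 w01 w11 - eF s c w00 w10 w01 w11)"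
  using assms unfolding aF_def eF_def
  apply algebra
  apply algebra
  done

lemma av_aF: "av d U \<psi> \<alpha> l = aF (of_real (cos \<alpha>)) (of_real (sin \<alpha>)) (Wv d U \<psi> 0 0 l) (Wv d U \<psi> 1 0 l) (Wv d U \<psi> 0 1 l) (Wv d U \<psi> 1 1 l)"
  unfolding av_W aF_def ..
lemma ev_eF: "ev d U \<psi> \<alpha> l = eF (of_real (cos \<alpha>)) (of_real (sin \<alpha>)) (Wv d U \<psi> 0 0 l) (Wv d U \<psi> 1 0 l) (Wv d U \<psi> 0 1 l) (Wv d U \<psi> 1 1 l)"
  unfolding ev_W eF_def ..

lemma trig4: "cos (- t) = cos t" "sin (- t) = - sin t" "cos (pi/2 - t) = sin t" "sin (pi/2 - t) = cos t"
  "cos (pi/2 + t) = - sin t" "sin (pi/2 + t) = cos t"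
  by (simp_all add: cos_diff sin_diff cos_add sin_add)

lemma rels:
  fixes t :: real and d :: nat and U :: "(nat \<times> nat) \<Rightarrow> (nat \<times> nat) \<Rightarrow> complex" and \<psi> :: "nat \<Rightarrow> complex"
  defines "c \<equiv> complex_of_real (cos t)" and "s \<equiv> complex_of_real (sin t)"
  defines "A \<equiv> av d U \<psi> (- t)" and "B \<equiv> av d U \<psi> t" and "C \<equiv> av d U \<psi> (pi/2 - t)" and "D \<equiv> av d U \<psi> (pi/2 + t)"
  defines "eA \<equiv> ev d U \<psi> (- t)" and "eB \<equiv> ev d U \<psi> t" and "eC \<equiv> ev d U \<psi> (pi/2 - t)" and "eD \<equiv> ev d U \<psi> (pi/2 + t)"
  shows
  "(c\<^sup>2 - s\<^sup>2) * (B l - A l) = c * s * (eA l + eB l - eC l - eD l)"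
  "(c\<^sup>2 - s\<^sup>2) * (C l - D l) = c * s * (eA l + eB l - eC l - eD l)"
  "s * c * (A l + B l - C l - D l) = s\<^sup>2 * (eB l - eA l) + c\<^sup>2 * (eD l - eC l)"
proof -
  have cs: "c\<^sup>2 + s\<^sup>2 = 1" unfolding c_def s_def by (rule cs1)
  note R = rel_alg[OF cs, of "Wv d U \<psi> 0 0 l" "Wv d U \<psi> 1 0 l" "Wv d U \<psi> 0 1 l" "Wv d U \<psi> 1 1 l"]
  show "(c\<^sup>2 - s\<^sup>2) * (B l - A l) = c * s * (eA l + eB l - eC l - eD l)"
    using R(1) unfolding A_def B_def C_def D_def eA_def eB_def eC_def eD_def av_aF ev_eF trig4 c_def s_def by simp
  show "(c\<^sup>2 - s\<^sup>2) * (C l - D l) = c * s * (eA l + eB l - eC l - eD l)"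
    using R(2) unfolding A_def B_def C_def D_def eA_def eB_def eC_def eD_def av_aF ev_eF trig4 c_def s_def by simp
  show "s * c * (A l + B l - C l - D l) = s\<^sup>2 * (eB l - eA l) + c\<^sup>2 * (eD l - eC l)"
    using R(3) unfolding A_def B_def C_def D_def eA_def eB_def eC_def eD_def av_aF ev_eF trig4 c_def s_def by simp
qed


lemma sq_le1: "0 \<le> (x::real) \<Longrightarrow> x\<^sup>2 \<le> 1 \<Longrightarrow> x \<le> 1"
  by (simp add: power_le_one_iff)

lemma four_sq: "((a::real) + b + c + e)\<^sup>2 \<le> 4 * (a\<^sup>2 + b\<^sup>2 + c\<^sup>2 + e\<^sup>2)"
proof -
  have h: "(a+b+c+e)\<^sup>2 = 4*(a\<^sup>2+b\<^sup>2+c\<^sup>2+e\<^sup>2) - ((a-b)\<^sup>2+(a-c)\<^sup>2+(a-e)\<^sup>2+(b-c)\<^sup>2+(b-e)\<^sup>2+(c-e)\<^sup>2)"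
    by (simp add: power2_eq_square algebra_simps)
  have "0 \<le> (a-b)\<^sup>2+(a-c)\<^sup>2+(a-e)\<^sup>2+(b-c)\<^sup>2+(b-e)\<^sup>2+(c-e)\<^sup>2" by simp
  then show ?thesis using h by linarith
qed

lemma nrm4: "nrm d (\<lambda>l. a l + b l - c l - e l) \<le> nrm d a + nrm d b + nrm d c + nrm d e"
proof -
  have "nrm d (\<lambda>l. a l + b l - c l - e l) \<le> nrm d (\<lambda>l. a l + b l - c l) + nrm d e"
    using nrm_diff[of d "\<lambda>l. a l + b l - c l" e] by simp
  also have "nrm d (\<lambda>l. a l + b l - c l) \<le> nrm d (\<lambda>l. a l + b l) + nrm d c"
    using nrm_diff[of d "\<lambda>l. a l + b l" c] by simp
  also have "nrm d (\<lambda>l. a l + b l) \<le> nrm d a + nrm d b" by (rule nrm_add)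
  finally show ?thesis by simp
qed

lemma nrm_ofreal: "nrm d (\<lambda>l. complex_of_real r * x l) = \<bar>r\<bar> * nrm d x"
  using nrm_scale[of d "complex_of_real r" x] by simp


lemma core:
  fixes A B C D eA eB eC eD :: "nat \<Rightarrow> complex" and t p :: real
  assumes t: "0 < t" "t \<le> pi/8" and p1: "p \<le> 1"
  and r1: "\<And>l. complex_of_real ((cos t)\<^sup>2 - (sin t)\<^sup>2) * (B l - A l) = complex_of_real (cos t * sin t) * (eA l + eB l - eC l - eD l)"
  and r2: "\<And>l. complex_of_real ((cos t)\<^sup>2 - (sin t)\<^sup>2) * (C l - D l) = complex_of_real (cos t * sin t) * (eA l + eB l - eC l - eD l)"
  and r3: "\<And>l. complex_of_real (sin t * cos t) * (A l + B l - C l - D l) = complex_of_real ((sin t)\<^sup>2) * (eB l - eA l) + complex_of_real ((cos t)\<^sup>2) * (eD l - eC l)"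
  and nA: "(nrm d A)\<^sup>2 + (nrm d eA)\<^sup>2 = 1" and nB: "(nrm d B)\<^sup>2 + (nrm d eB)\<^sup>2 = 1"
  and nC: "(nrm d C)\<^sup>2 + (nrm d eC)\<^sup>2 = 1" and nD: "(nrm d D)\<^sup>2 + (nrm d eD)\<^sup>2 = 1"
  and povm: "bob_povm d E0 E1"
  and perr: "((nrm d eA)\<^sup>2 + (nrm d eB)\<^sup>2 + (nrm d eC)\<^sup>2 + (nrm d eD)\<^sup>2) / 4 \<le> p"
  shows "(Qf d E0 A + Qf d E0 eA + Qf d E0 B + Qf d E0 eB + Qf d E1 C + Qf d E1 eC + Qf d E1 D + Qf d E1 eD) / 4
          \<le> 1/2 + 11 * sqrt p / sin (2 * t)"
proof -
  define c where "c = cos t"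
  define s where "s = sin t"
  have pi8: "pi/8 < pi/2" using pi_gt_zero by simp
  have s0: "0 < s" unfolding s_def using t pi8 by (intro sin_gt_zero) auto
  have c0: "0 < c" unfolding c_def using t pi8 by (intro cos_gt_zero_pi) auto
  define s2 where "s2 = sin (2*t)"
  have s2e: "s2 = 2 * s * c" unfolding s2_def s_def c_def by (simp add: sin_double)
  have s2p: "0 < s2" using s2e s0 c0 by simp
  have s2l: "s2 \<le> 1" unfolding s2_def by simp
  have cdl: "c\<^sup>2 - s\<^sup>2 \<ge> 1/2"
  proof -
    have "cos (pi/4) \<le> cos (2*t)" using t by (intro cos_monotone_0_pi_le) auto
    moreover have "sqrt 2 \<ge> 1" by simp
    ultimately have "cos (2*t) \<ge> 1/2" unfolding cos_45 by linarith
    then show ?thesis unfolding c_def s_def cos_double by simp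
  qed
  have absc: "\<bar>c\<^sup>2 - s\<^sup>2\<bar> = c\<^sup>2 - s\<^sup>2" using cdl by simp
  have csl: "c * s \<le> 1/2"
  proof -
    have "2 * s * c = 2 * (c * s)" by simp
    then show ?thesis using s2e s2l by linarith
  qed
  have c2: "c\<^sup>2 \<le> 1" unfolding c_def using sin_cos_squared_add[of t] zero_le_power2[of "sin t"] by linarith
  have s2': "s\<^sup>2 \<le> 1" unfolding s_def using sin_cos_squared_add[of t] zero_le_power2[of "cos t"] by linarith
  have b0: "\<And>v. Qf d E0 v \<ge> 0" "\<And>v. Qf d E1 v \<ge> 0" "\<And>v. Qf d E0 v + Qf d E1 v \<le> (nrm d v)\<^sup>2"
    using povm_bounds[OF povm] by auto
  have b1a: "Qf d E0 v \<le> (nrm d v)\<^sup>2" for v using b0(2)[of v] b0(3)[of v] by linarith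
  have b1b: "Qf d E1 v \<le> (nrm d v)\<^sup>2" for v using b0(1)[of v] b0(3)[of v] by linarith
  note b1 = b1a b1b
  have perr4: "(nrm d eA)\<^sup>2 + (nrm d eB)\<^sup>2 + (nrm d eC)\<^sup>2 + (nrm d eD)\<^sup>2 \<le> 4 * p" using perr by simp
  define SE where "SE = nrm d eA + nrm d eB + nrm d eC + nrm d eD"
  have "0 \<le> ((nrm d eA)\<^sup>2 + (nrm d eB)\<^sup>2 + (nrm d eC)\<^sup>2 + (nrm d eD)\<^sup>2) / 4" by simp
  then have p0: "0 \<le> p" using perr by linarith
  have SEb: "SE \<le> 4 * sqrt p"
  proof -
    have "SE\<^sup>2 \<le> 16 * p" unfolding SE_def using order_trans[OF four_sq[of "nrm d eA" "nrm d eB" "nrm d eC" "nrm d eD"] mult_left_mono[OF perr4, of 4]] by simp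
    then have "SE \<le> sqrt (16 * p)" by (rule real_le_rsqrt)
    also have "\<dots> = 4 * sqrt p" by (simp add: real_sqrt_mult)
    finally show ?thesis .
  qed
  have SE0: "0 \<le> SE" unfolding SE_def by (simp add: nrm_nonneg add_nonneg_nonneg)
  have "(nrm d A)\<^sup>2 \<le> 1" using nA zero_le_power2[of "nrm d eA"] by linarith
  moreover have "(nrm d B)\<^sup>2 \<le> 1" using nB zero_le_power2[of "nrm d eB"] by linarith
  moreover have "(nrm d C)\<^sup>2 \<le> 1" using nC zero_le_power2[of "nrm d eC"] by linarith
  moreover have "(nrm d D)\<^sup>2 \<le> 1" using nD zero_le_power2[of "nrm d eD"] by linarith
  ultimately have nle: "nrm d A \<le> 1" "nrm d B \<le> 1" "nrm d C \<le> 1" "nrm d D \<le> 1"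
    using sq_le1 nrm_nonneg by blast+
  have errs: "Qf d E0 eA + Qf d E0 eB + Qf d E1 eC + Qf d E1 eD \<le> 4 * p"
    using b1(1)[of eA] b1(1)[of eB] b1(2)[of eC] b1(2)[of eD] perr4 by linarith
  have G4: "nrm d (\<lambda>l. eA l + eB l - eC l - eD l) \<le> SE" unfolding SE_def by (rule nrm4)
  have dAB: "nrm d (\<lambda>l. B l - A l) \<le> SE"
  proof -
    have "(c\<^sup>2 - s\<^sup>2) * nrm d (\<lambda>l. B l - A l) = (c * s) * nrm d (\<lambda>l. eA l + eB l - eC l - eD l)"
      using nrm_ofreal[of d "c\<^sup>2 - s\<^sup>2" "\<lambda>l. B l - A l"] nrm_ofreal[of d "c * s" "\<lambda>l. eA l + eB l - eC l - eD l"]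
        r1 absc c0 s0 unfolding c_def s_def by simp
    also have "\<dots> \<le> (1/2) * SE" using G4 csl c0 s0 nrm_nonneg by (intro mult_mono) auto
    finally have "(c\<^sup>2 - s\<^sup>2) * nrm d (\<lambda>l. B l - A l) \<le> (1/2) * SE" .
    moreover have "(1/2) * nrm d (\<lambda>l. B l - A l) \<le> (c\<^sup>2 - s\<^sup>2) * nrm d (\<lambda>l. B l - A l)"
      using cdl nrm_nonneg by (intro mult_right_mono) auto
    ultimately show ?thesis by linarith
  qed
  have dCD: "nrm d (\<lambda>l. C l - D l) \<le> SE"
  proof -
    have "(c\<^sup>2 - s\<^sup>2) * nrm d (\<lambda>l. C l - D l) = (c * s) * nrm d (\<lambda>l. eA l + eB l - eC l - eD l)"
      using nrm_ofreal[of d "c\<^sup>2 - s\<^sup>2" "\<lambda>l. C l - D l"] nrm_ofreal[of d "c * s" "\<lambda>l. eA l + eB l - eC l - eD l"]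
        r2 absc c0 s0 unfolding c_def s_def by simp
    also have "\<dots> \<le> (1/2) * SE" using G4 csl c0 s0 nrm_nonneg by (intro mult_mono) auto
    finally have "(c\<^sup>2 - s\<^sup>2) * nrm d (\<lambda>l. C l - D l) \<le> (1/2) * SE" .
    moreover have "(1/2) * nrm d (\<lambda>l. C l - D l) \<le> (c\<^sup>2 - s\<^sup>2) * nrm d (\<lambda>l. C l - D l)"
      using cdl nrm_nonneg by (intro mult_right_mono) auto
    ultimately show ?thesis by linarith
  qed
  have dS: "s2 * nrm d (\<lambda>l. A l + B l - C l - D l) \<le> 2 * SE"
  proof -
    have "(s * c) * nrm d (\<lambda>l. A l + B l - C l - D l)
        = nrm d (\<lambda>l. complex_of_real (s\<^sup>2) * (eB l - eA l) + complex_of_real (c\<^sup>2) * (eD l - eC l))"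
      using nrm_ofreal[of d "s * c" "\<lambda>l. A l + B l - C l - D l"] r3 s0 c0 unfolding c_def s_def by simp
    also have "\<dots> \<le> nrm d (\<lambda>l. complex_of_real (s\<^sup>2) * (eB l - eA l)) + nrm d (\<lambda>l. complex_of_real (c\<^sup>2) * (eD l - eC l))"
      by (rule nrm_add)
    also have "\<dots> = s\<^sup>2 * nrm d (\<lambda>l. eB l - eA l) + c\<^sup>2 * nrm d (\<lambda>l. eD l - eC l)"
      unfolding nrm_ofreal by simp
    also have "\<dots> \<le> 1 * (nrm d eB + nrm d eA) + 1 * (nrm d eD + nrm d eC)"
      using s2' c2 nrm_diff nrm_nonneg by (intro add_mono mult_mono) auto
    finally show ?thesis unfolding s2e SE_def by (simp add: algebra_simps)
  qed
  define M where "M = (\<lambda>l. complex_of_real (1/2) * (A l + B l))"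
  define H where "H = (\<lambda>l. complex_of_real (1/2) * (A l - B l))"
  define N where "N = (\<lambda>l. complex_of_real (1/2) * (C l + D l))"
  define H2 where "H2 = (\<lambda>l. complex_of_real (1/2) * (C l - D l))"
  define G where "G = (\<lambda>l. complex_of_real (- 1/2) * (A l + B l - C l - D l))"
  have eA': "A = (\<lambda>l. complex_of_real 1 * M l + complex_of_real 1 * H l)"
    unfolding M_def H_def by (auto simp: fun_eq_iff field_simps)
  have eB': "B = (\<lambda>l. complex_of_real 1 * M l + complex_of_real (-1) * H l)"
    unfolding M_def H_def by (auto simp: fun_eq_iff field_simps)
  have eC': "C = (\<lambda>l. complex_of_real 1 * N l + complex_of_real 1 * H2 l)"
    unfolding N_def H2_def by (auto simp: fun_eq_iff field_simps)
  have eD': "D = (\<lambda>l. complex_of_real 1 * N l + complex_of_real (-1) * H2 l)"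
    unfolding N_def H2_def by (auto simp: fun_eq_iff field_simps)
  have eN': "N = (\<lambda>l. complex_of_real 1 * M l + complex_of_real 1 * G l)"
    unfolding N_def M_def G_def by (auto simp: fun_eq_iff field_simps)
  have qAB: "Qf d E0 A + Qf d E0 B = 2 * Qf d E0 M + 2 * Qf d E0 H"
    by (subst eA', subst eB', simp only: Qf_lin) simp
  have qCD: "Qf d E1 C + Qf d E1 D = 2 * Qf d E1 N + 2 * Qf d E1 H2"
    by (subst eC', subst eD', simp only: Qf_lin) simp
  have qN: "Qf d E1 N = Qf d E1 M + Sf d E1 M G + Qf d E1 G"
    by (subst eN', simp only: Qf_lin) simp
  have nM: "nrm d M \<le> 1"
  proof -
    have "nrm d M = 1/2 * nrm d (\<lambda>l. A l + B l)" unfolding M_def nrm_ofreal by simp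
    also have "\<dots> \<le> 1/2 * (nrm d A + nrm d B)" by (intro mult_left_mono nrm_add) auto
    also have "\<dots> \<le> 1/2 * (1 + 1)" using nle by (intro mult_left_mono add_mono) auto
    finally show ?thesis by simp
  qed
  have nN: "nrm d N \<le> 1"
  proof -
    have "nrm d N = 1/2 * nrm d (\<lambda>l. C l + D l)" unfolding N_def nrm_ofreal by simp
    also have "\<dots> \<le> 1/2 * (nrm d C + nrm d D)" by (intro mult_left_mono nrm_add) auto
    also have "\<dots> \<le> 1/2 * (1 + 1)" using nle by (intro mult_left_mono add_mono) auto
    finally show ?thesis by simp
  qed
  have nH: "(nrm d H)\<^sup>2 \<le> SE / 2"
  proof -
    have e: "nrm d H = 1/2 * nrm d (\<lambda>l. B l - A l)"
    proof -
      have "nrm d H = nrm d (\<lambda>l. complex_of_real (- 1/2) * (B l - A l))"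
        unfolding H_def by (rule nrm_cong) (simp add: field_simps)
      then show ?thesis unfolding nrm_ofreal by simp
    qed
    have "nrm d (\<lambda>l. B l - A l) \<le> 2" using nrm_diff[of d B A] nle by linarith
    then have "(nrm d (\<lambda>l. B l - A l))\<^sup>2 \<le> 2 * SE" unfolding power2_eq_square
      using dAB nrm_nonneg by (intro mult_mono) auto
    then show ?thesis unfolding e by (simp add: power_mult_distrib power2_eq_square)
  qed
  have nH2: "(nrm d H2)\<^sup>2 \<le> SE / 2"
  proof -
    have e: "nrm d H2 = 1/2 * nrm d (\<lambda>l. C l - D l)"
      unfolding H2_def nrm_ofreal by simp
    have "nrm d (\<lambda>l. C l - D l) \<le> 2" using nrm_diff[of d C D] nle by linarith
    then have "(nrm d (\<lambda>l. C l - D l))\<^sup>2 \<le> 2 * SE" unfolding power2_eq_square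
      using dCD nrm_nonneg by (intro mult_mono) auto
    then show ?thesis unfolding e by (simp add: power_mult_distrib power2_eq_square)
  qed
  have nG: "s2 * nrm d G \<le> SE"
  proof -
    have "nrm d G = 1/2 * nrm d (\<lambda>l. A l + B l - C l - D l)" unfolding G_def nrm_ofreal by simp
    then have e: "nrm d (\<lambda>l. A l + B l - C l - D l) = 2 * nrm d G" by simp
    show ?thesis using dS unfolding e by (simp add: algebra_simps)
  qed
  have nG2: "nrm d G \<le> 2"
  proof -
    have "G = (\<lambda>l. N l - M l)" unfolding N_def M_def G_def by (auto simp: fun_eq_iff field_simps)
    then have "nrm d G \<le> nrm d N + nrm d M" using nrm_diff[of d N M] by simp
    then show ?thesis using nM nN by linarith
  qed
  have sf: "Sf d E1 M G \<le> 2 * nrm d M * nrm d G" by (rule Sf_bound2) (use b0 b1 in auto)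
  have "nrm d G * nrm d G \<le> 2 * nrm d G" by (rule mult_right_mono[OF nG2 nrm_nonneg])
  then have qG: "Qf d E1 G \<le> 2 * nrm d G"
    using b1(2)[of G] unfolding power2_eq_square by linarith
  have "nrm d M * nrm d G \<le> 1 * nrm d G" by (rule mult_right_mono[OF nM nrm_nonneg])
  then have sfG: "Sf d E1 M G \<le> 2 * nrm d G"
    using sf by linarith
  have "(nrm d M)\<^sup>2 \<le> 1" by (rule power_le_one[OF nrm_nonneg nM])
  then have QM: "Qf d E0 M + Qf d E1 M \<le> 1"
    using b0(3)[of M] by linarith
  have GS: "nrm d G \<le> SE / s2" using nG s2p by (simp add: field_simps)
  have tot: "Qf d E0 A + Qf d E0 eA + Qf d E0 B + Qf d E0 eB + Qf d E1 C + Qf d E1 eC + Qf d E1 D + Qf d E1 eD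
      \<le> 2 + 8 * (SE / s2) + 2 * SE + 4 * p"
    using qAB qCD qN errs b1(1)[of H] b1(2)[of H2] nH nH2 qG sfG QM GS by linarith
  have sp: "0 \<le> sqrt p" using p0 by simp
  have "sqrt p \<le> 1" using p1 by simp
  then have "sqrt p * sqrt p \<le> sqrt p * 1" using sp by (rule mult_left_mono)
  then have pp: "p \<le> sqrt p" using p0 by simp
  have sps: "sqrt p \<le> sqrt p / s2" using sp s2p s2l by (simp add: le_divide_eq mult_left_le)
  have "8 * (SE / s2) \<le> 32 * (sqrt p / s2)"
    using SEb s2p by (simp add: divide_right_mono)
  then have "2 + 8 * (SE / s2) + 2 * SE + 4 * p \<le> 2 + 44 * (sqrt p / s2)"
    using SEb pp sps by linarith
  with tot show ?thesis unfolding s2_def by simp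
qed


lemma phibx: "phi_bx \<theta> False False = phi (- \<theta>)" "phi_bx \<theta> False True = phi \<theta>"
  "phi_bx \<theta> True False = phi (pi/2 - \<theta>)" "phi_bx \<theta> True True = phi (pi/2 + \<theta>)"
  by (simp_all add: phi_bx_def)

lemma bob_eq: "bob_prob \<theta> d U \<psi> E b x = Qf d E (av d U \<psi> (if \<not> b \<and> \<not> x then - \<theta> else if \<not> b then \<theta> else if \<not> x then pi/2 - \<theta> else pi/2 + \<theta>))
   + Qf d E (ev d U \<psi> (if \<not> b \<and> \<not> x then - \<theta> else if \<not> b then \<theta> else if \<not> x then pi/2 - \<theta> else pi/2 + \<theta>))"
  unfolding bob_prob_def by (cases b; cases x) (simp_all add: phibx bob_av)

lemma acc_eq:
  assumes "unitary_on d U" "unit_vec d \<psi>"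
  shows "1 - accept_prob \<theta> d U \<psi> b x = (nrm d (ev d U \<psi> (if \<not> b \<and> \<not> x then - \<theta> else if \<not> b then \<theta> else if \<not> x then pi/2 - \<theta> else pi/2 + \<theta>)))\<^sup>2"
proof -
  have h: "\<And>\<alpha>. 1 - (nrm d (av d U \<psi> \<alpha>))\<^sup>2 = (nrm d (ev d U \<psi> \<alpha>))\<^sup>2"
    using av_ev_norm[OF assms] by (metis add_diff_cancel_left')
  show ?thesis unfolding accept_prob_def
    by (cases b; cases x) (simp_all add: phibx accept_av h)
qed

theorem theorem10:
  shows "\<exists>C::real. \<forall>\<theta> p. 0 < \<theta> \<longrightarrow> \<theta> \<le> pi/8 \<longrightarrow> 0 \<le> p \<longrightarrow> p \<le> 1 \<longrightarrow>
           sealing \<theta> (C * sqrt p / sin (2 * \<theta>)) p"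
proof (intro exI allI impI)
  fix \<theta> p :: real
  assume t1: "0 < \<theta>" and t2: "\<theta> \<le> pi/8" and p0: "0 \<le> p" and p1: "p \<le> 1"
  show "sealing \<theta> (11 * sqrt p / sin (2 * \<theta>)) p"
    unfolding sealing_def
  proof (intro allI impI)
    fix d U \<psi> E0 E1
    assume d0: "0 < d" and u: "unitary_on d U" and uv: "unit_vec d \<psi>" and povm: "bob_povm d E0 E1"
    define A where "A = av d U \<psi> (- \<theta>)"
    define B where "B = av d U \<psi> \<theta>"
    define C where "C = av d U \<psi> (pi/2 - \<theta>)"
    define D where "D = av d U \<psi> (pi/2 + \<theta>)"
    define eA where "eA = ev d U \<psi> (- \<theta>)"
    define eB where "eB = ev d U \<psi> \<theta>"
    define eC where "eC = ev d U \<psi> (pi/2 - \<theta>)"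
    define eD where "eD = ev d U \<psi> (pi/2 + \<theta>)"
    have pc: "prob_correct \<theta> d U \<psi> E0 E1 = (Qf d E0 A + Qf d E0 eA + Qf d E0 B + Qf d E0 eB + Qf d E1 C + Qf d E1 eC + Qf d E1 D + Qf d E1 eD) / 4"
      unfolding prob_correct_def A_def B_def C_def D_def eA_def eB_def eC_def eD_def
      by (simp add: UNIV_bool bob_eq)
    have pe: "prob_err \<theta> d U \<psi> = ((nrm d eA)\<^sup>2 + (nrm d eB)\<^sup>2 + (nrm d eC)\<^sup>2 + (nrm d eD)\<^sup>2) / 4"
      unfolding prob_err_def eA_def eB_def eC_def eD_def
      by (simp add: UNIV_bool acc_eq[OF u uv])
    show "prob_correct \<theta> d U \<psi> E0 E1 \<le> 1/2 + 11 * sqrt p / sin (2 * \<theta>) \<or> prob_err \<theta> d U \<psi> \<ge> p"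
    proof (cases "prob_err \<theta> d U \<psi> \<ge> p")
      case True then show ?thesis by simp
    next
      case False
      then have perr: "((nrm d eA)\<^sup>2 + (nrm d eB)\<^sup>2 + (nrm d eC)\<^sup>2 + (nrm d eD)\<^sup>2) / 4 \<le> p"
        unfolding pe by simp
      have r1: "\<And>l. complex_of_real ((cos \<theta>)\<^sup>2 - (sin \<theta>)\<^sup>2) * (B l - A l) = complex_of_real (cos \<theta> * sin \<theta>) * (eA l + eB l - eC l - eD l)"
        using rels(1)[of \<theta> d U \<psi>] unfolding A_def B_def C_def D_def eA_def eB_def eC_def eD_def by simp
      have r2: "\<And>l. complex_of_real ((cos \<theta>)\<^sup>2 - (sin \<theta>)\<^sup>2) * (C l - D l) = complex_of_real (cos \<theta> * sin \<theta>) * (eA l + eB l - eC l - eD l)"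
        using rels(2)[of \<theta> d U \<psi>] unfolding A_def B_def C_def D_def eA_def eB_def eC_def eD_def by simp
      have r3: "\<And>l. complex_of_real (sin \<theta> * cos \<theta>) * (A l + B l - C l - D l) = complex_of_real ((sin \<theta>)\<^sup>2) * (eB l - eA l) + complex_of_real ((cos \<theta>)\<^sup>2) * (eD l - eC l)"
        using rels(3)[of \<theta> d U \<psi>] unfolding A_def B_def C_def D_def eA_def eB_def eC_def eD_def by simp
      have "prob_correct \<theta> d U \<psi> E0 E1 \<le> 1/2 + 11 * sqrt p / sin (2 * \<theta>)"
        unfolding pc
        by (rule core[OF t1 t2 p1 r1 r2 r3 _ _ _ _ povm perr])
           (simp_all add: A_def B_def C_def D_def eA_def eB_def eC_def eD_def av_ev_norm[OF u uv])
      then show ?thesis by simp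
    qed
  qed
qed

end
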